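(* Let $0<q<1$ and $q^*=2-q$. Let $X_1,X_2,\dots,X_n$ be i.i.d. real random variables. Then for all real $x$ and all $a>0$ with $(1-q)ax<1$, $$\mathrm{Prob}\left(\frac1n\sum_{k=1}^nX_k\ge x\right)\le\left[\exp_q(-ax)\right]^nA^n(a),\qquad A(a)=\mathbb{E}\exp_{q^*}(aX_1).$$
   Context: For $q\in(0,2)$, $q\ne1$, the $q$-deformed exponential is $\exp_q(u)=[1+(1-q)u]_+^{1/(1-q)}$ for real $u$ (value in $[0,+\infty]$), where $[u]_+=\max(u,0)$. *)

theory Defs
  imports "HOL-Probability.Probability"
begin

definition qexp :: "real \<Rightarrow> real \<Rightarrow> ennreal" where
  "qexp q u = (let b = max (1 + (1 - q) * u) 0 in
     if b = 0 then (if 1 / (1 - q) > 0 then 0 else \<infinity>)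
     else ennreal (b powr (1 / (1 - q))))"

end

theory Submission
  imports Defs
begin

lemma qexp_meas: "(\<lambda>u. qexp r u) \<in> borel_measurable borel"
  unfolding qexp_def Let_def by measurable

lemma qexp_star:
  assumes "0 < q" "q < 1"
  shows "qexp (2-q) u = (if 1-(1-q)*u \<le> 0 then \<infinity> else ennreal ((1-(1-q)*u) powr (-(1/(1-q)))))"
proof -
  have e1: "1 + (1 - (2-q)) * u = 1-(1-q)*u" by algebra
  have e2: "1 / (1 - (2-q)) = -(1/(1-q))" using assms by (simp add: field_simps)
  have "\<not> (-(1/(1-q)) > 0)" using assms by simp
  then show ?thesis unfolding qexp_def Let_def e1 e2 by (auto simp: max_def)
qed

lemma qexp_pos:
  assumes "0 < q" "q < 1" "1 + (1-q)*u > 0"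
  shows "qexp q u = ennreal ((1+(1-q)*u) powr (1/(1-q)))"
  using assms unfolding qexp_def Let_def by (auto simp: max_def)

lemma prod_le_pow:
  fixes t :: "nat \<Rightarrow> real"
  assumes "finite I" "\<And>k. k \<in> I \<Longrightarrow> t k > 0" "s > 0" "(\<Sum>k\<in>I. t k) \<le> real (card I) * s"
  shows "(\<Prod>k\<in>I. t k) \<le> s ^ card I"
proof -
  have "\<And>k. k \<in> I \<Longrightarrow> ln (t k) \<le> ln s + (t k / s - 1)"
  proof -
    fix k assume k: "k \<in> I"
    have "ln (t k / s) \<le> t k / s - 1" using assms(2)[OF k] assms(3) by (intro ln_le_minus_one) simp
    then show "ln (t k) \<le> ln s + (t k / s - 1)" using assms(2)[OF k] assms(3) by (simp add: ln_div)
  qed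
  then have "(\<Sum>k\<in>I. ln (t k)) \<le> (\<Sum>k\<in>I. ln s + (t k / s - 1))" by (rule sum_mono)
  also have "\<dots> = real (card I) * ln s + ((\<Sum>k\<in>I. t k) / s - real (card I))"
    by (simp add: sum.distrib sum_subtractf sum_divide_distrib[symmetric])
  also have "\<dots> \<le> real (card I) * ln s"
  proof -
    have "(\<Sum>k\<in>I. t k) / s \<le> real (card I)" using assms(3,4) by (simp add: divide_le_eq)
    then show ?thesis by simp
  qed
  finally have "exp (\<Sum>k\<in>I. ln (t k)) \<le> exp (real (card I) * ln s)" by simp
  moreover have "exp (\<Sum>k\<in>I. ln (t k)) = (\<Prod>k\<in>I. t k)"
    using assms(1,2) by (simp add: exp_sum)
  moreover have "exp (real (card I) * ln s) = s ^ card I" using assms(3)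
    by (simp add: exp_of_nat_mult)
  ultimately show ?thesis by simp
qed


lemma prod_ennreal_nz:
  fixes f :: "nat \<Rightarrow> ennreal"
  shows "finite A \<Longrightarrow> (\<And>a. a \<in> A \<Longrightarrow> f a \<noteq> 0) \<Longrightarrow> prod f A \<noteq> 0"
  by (induction A rule: finite_induct) auto

lemma pointwise:
  fixes y :: "nat \<Rightarrow> real"
  assumes q: "0 < q" "q < 1" and n: "n \<ge> 1" and a: "a > 0" and ax: "(1 - q) * a * x < 1"
    and sy: "real n * x \<le> (\<Sum>k=1..n. y k)"
  shows "1 \<le> (qexp q (- a * x)) ^ n * (\<Prod>k\<in>{1..n}. qexp (2 - q) (a * y k))"
proof -
  define p where "p = 1/(1-q)"
  have p: "p > 0" using q by (simp add: p_def)
  define t where "t k = 1 - (1-q)*(a*y k)" for k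
  define t0 where "t0 = 1 + (1-q)*(-a*x)"
  have t0: "t0 > 0" using ax by (simp add: t0_def algebra_simps)
  have C: "qexp q (- a * x) = ennreal (t0 powr p)"
    unfolding t0_def p_def using q t0[unfolded t0_def] by (rule qexp_pos)
  have Cpow: "(qexp q (- a * x)) ^ n = ennreal ((t0 ^ n) powr p)"
  proof -
    have "(t0 ^ n) powr p = (t0 powr p) ^ n"
      using t0 by (simp add: powr_realpow[symmetric] powr_powr powr_power mult.commute)
    then show ?thesis unfolding C using t0 by (simp add: ennreal_power)
  qed
  have Cnz: "(qexp q (- a * x)) ^ n \<noteq> 0" using Cpow t0 by simp
  have F: "qexp (2-q) (a * y k) = (if t k \<le> 0 then \<infinity> else ennreal (t k powr (-p)))" for k
    using qexp_star[OF q, of "a * y k"] by (simp add: t_def p_def)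
  show ?thesis
  proof (cases "\<exists>k\<in>{1..n}. t k \<le> 0")
    case True
    then obtain k where k: "k \<in> {1..n}" "t k \<le> 0" by blast
    have nz: "(\<Prod>j\<in>{1..n}-{k}. qexp (2 - q) (a * y j)) \<noteq> 0"
      by (rule prod_ennreal_nz) (auto simp: F)
    have "(\<Prod>j\<in>{1..n}. qexp (2 - q) (a * y j)) = qexp (2 - q) (a * y k) * (\<Prod>j\<in>{1..n}-{k}. qexp (2 - q) (a * y j))"
      using k by (simp add: prod.remove)
    also have "\<dots> = \<infinity>" using k nz by (simp add: F)
    finally show ?thesis using Cnz by simp
  next
    case False
    then have tp: "\<And>k. k \<in> {1..n} \<Longrightarrow> t k > 0" by (meson not_le)
    have "(\<Prod>k\<in>{1..n}. qexp (2 - q) (a * y k)) = (\<Prod>k\<in>{1..n}. ennreal (t k powr (-p)))"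
      using tp by (intro prod.cong refl) (metis F not_le)
    also have "\<dots> = ennreal (\<Prod>k\<in>{1..n}. t k powr (-p))" by (rule prod_ennreal) simp
    also have "(\<Prod>k\<in>{1..n}. t k powr (-p)) = (\<Prod>k\<in>{1..n}. t k) powr (-p)"
      using tp by (simp add: prod_powr_distrib less_imp_le)
    finally have P: "(\<Prod>k\<in>{1..n}. qexp (2 - q) (a * y k)) = ennreal ((\<Prod>k\<in>{1..n}. t k) powr (-p))" .
    define P where "P = (\<Prod>k\<in>{1..n}. t k)"
    have Ppos: "P > 0" unfolding P_def by (rule prod_pos) (rule tp)
    have "(\<Sum>k\<in>{1..n}. t k) = real n - (1-q)*a*(\<Sum>k=1..n. y k)"
      by (simp add: t_def sum_subtractf sum_distrib_left[symmetric] mult.assoc)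
    also have "\<dots> \<le> real n - (1-q)*a*(real n * x)"
      using sy q a by (intro diff_left_mono mult_left_mono) auto
    also have "\<dots> = real (card {1..n}) * t0" by (simp add: t0_def algebra_simps)
    finally have "P \<le> t0 ^ card {1..n}" unfolding P_def
      by (intro prod_le_pow tp t0) auto
    then have Ple: "P \<le> t0 ^ n" by simp
    have "P powr p \<le> (t0 ^ n) powr p" using Ple Ppos p by (intro powr_mono2) auto
    then have "1 \<le> (t0 ^ n) powr p * P powr (-p)"
      using Ppos by (simp add: powr_minus field_simps)
    then have "ennreal 1 \<le> ennreal ((t0 ^ n) powr p * P powr (-p))" by (rule ennreal_leI)
    then show ?thesis unfolding Cpow P P_def[symmetric] using t0 Ppos by (simp add: ennreal_mult[symmetric])
  qed
qed

theorem proposition3: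
  fixes M :: "'a measure" and X :: "nat \<Rightarrow> 'a \<Rightarrow> real"
    and q x a :: real and n :: nat
  assumes "prob_space M"
    and "0 < q" and "q < 1"
    and "n \<ge> 1"
    and rv: "\<And>k. k \<in> {1..n} \<Longrightarrow> X k \<in> borel_measurable M"
    and indep: "prob_space.indep_vars M (\<lambda>_. borel) X {1..n}"
    and ident: "\<And>k. k \<in> {1..n} \<Longrightarrow> distr M borel (X k) = distr M borel (X 1)"
    and "a > 0" and "(1 - q) * a * x < 1"
  shows "emeasure M {\<omega> \<in> space M. (1 / real n) * (\<Sum>k=1..n. X k \<omega>) \<ge> x}
         \<le> (qexp q (- a * x)) ^ n * (\<integral>\<^sup>+ \<omega>. qexp (2 - q) (a * X 1 \<omega>) \<partial>M) ^ n"
proof -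
  interpret prob_space M by fact
  define E where "E = {\<omega> \<in> space M. (1 / real n) * (\<Sum>k=1..n. X k \<omega>) \<ge> x}"
  define C where "C = (qexp q (- a * x)) ^ n"
  define g where "g u = qexp (2 - q) (a * u)" for u
  have gm: "g \<in> borel_measurable borel" unfolding g_def
    using measurable_compose[OF _ qexp_meas, of "\<lambda>u. a * u" borel] by simp
  have rv1: "X 1 \<in> borel_measurable M" using rv \<open>n \<ge> 1\<close> by simp
  have Em: "E \<in> sets M" unfolding E_def using rv by measurable
  have npos: "real n > 0" using \<open>n \<ge> 1\<close> by simp
  have "emeasure M E = (\<integral>\<^sup>+ \<omega>. indicator E \<omega> \<partial>M)" using Em by simp
  also have "\<dots> \<le> (\<integral>\<^sup>+ \<omega>. C * (\<Prod>k\<in>{1..n}. g (X k \<omega>)) \<partial>M)"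
  proof (intro nn_integral_mono)
    fix \<omega> assume "\<omega> \<in> space M"
    show "indicator E \<omega> \<le> C * (\<Prod>k\<in>{1..n}. g (X k \<omega>))"
    proof (cases "\<omega> \<in> E")
      case True
      then have "x \<le> (1 / real n) * (\<Sum>k=1..n. X k \<omega>)" by (simp add: E_def)
      then have "real n * x \<le> (\<Sum>k=1..n. X k \<omega>)" using npos by (simp add: field_simps)
      then show ?thesis using True pointwise[OF \<open>0<q\<close> \<open>q<1\<close> \<open>n\<ge>1\<close> \<open>a>0\<close> \<open>(1 - q) * a * x < 1\<close>, of "\<lambda>k. X k \<omega>"]
        by (simp add: C_def g_def)
    qed simp
  qed
  also have "\<dots> = C * (\<integral>\<^sup>+ \<omega>. (\<Prod>k\<in>{1..n}. g (X k \<omega>)) \<partial>M)"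
    by (intro nn_integral_cmult borel_measurable_prod_ennreal) (simp add: measurable_compose[OF rv gm])
  also have "(\<integral>\<^sup>+ \<omega>. (\<Prod>k\<in>{1..n}. g (X k \<omega>)) \<partial>M) = (\<Prod>k\<in>{1..n}. \<integral>\<^sup>+ \<omega>. g (X k \<omega>) \<partial>M)"
  proof (rule indep_vars_nn_integral)
    show "indep_vars (\<lambda>_. borel) (\<lambda>k \<omega>. g (X k \<omega>)) {1..n}"
      using indep gm by (intro indep_vars_compose2[where M'="\<lambda>_. borel" and X=X and Y="\<lambda>_. g"])
        (simp_all add: measurable_compose[OF rv gm])
  qed auto
  also have "\<dots> = (\<Prod>k\<in>{1..n}. \<integral>\<^sup>+ \<omega>. g (X 1 \<omega>) \<partial>M)"
  proof (intro prod.cong refl)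
    fix k assume k: "k \<in> {1..n}"
    have "(\<integral>\<^sup>+ \<omega>. g (X k \<omega>) \<partial>M) = (\<integral>\<^sup>+ u. g u \<partial>distr M borel (X k))"
      using rv[OF k] gm by (simp add: nn_integral_distr)
    also have "\<dots> = (\<integral>\<^sup>+ u. g u \<partial>distr M borel (X 1))" using ident[OF k] by simp
    also have "\<dots> = (\<integral>\<^sup>+ \<omega>. g (X 1 \<omega>) \<partial>M)"
      using rv1 gm by (simp add: nn_integral_distr)
    finally show "(\<integral>\<^sup>+ \<omega>. g (X k \<omega>) \<partial>M) = (\<integral>\<^sup>+ \<omega>. g (X 1 \<omega>) \<partial>M)" .
  qed
  also have "\<dots> = (\<integral>\<^sup>+ \<omega>. g (X 1 \<omega>) \<partial>M) ^ n" by simp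
  finally show ?thesis by (simp add: E_def C_def g_def)
qed

end
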